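(* Let $\phi_1,\phi_2\in D=\{z\in\mathbb{C};|z|<1\}$ and let $Z$ be a random variable on the unit circle $\partial D$ with density, with respect to arc length, $$f(z)=\frac{1}{2\pi}\frac{|1-\phi_1\overline{\phi_2}|^2}{1-|\phi_1\overline{\phi_2}|^2}\frac{1-|\phi_1|^2}{|z-\phi_1|^2}\frac{1-|\phi_2|^2}{|z-\phi_2|^2}.$$ Then $E(Z)=0$ if and only if $\phi_1=-\phi_2$. *)

theory Defs
  imports "HOL-Analysis.Analysis"
begin

definition circ_density :: "complex \<Rightarrow> complex \<Rightarrow> complex \<Rightarrow> real" where
  "circ_density \<phi>1 \<phi>2 z =
     1 / (2 * pi)
     * ((cmod (1 - \<phi>1 * cnj \<phi>2))\<^sup>2 / (1 - (cmod (\<phi>1 * cnj \<phi>2))\<^sup>2))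
     * ((1 - (cmod \<phi>1)\<^sup>2) / (cmod (z - \<phi>1))\<^sup>2)
     * ((1 - (cmod \<phi>2)\<^sup>2) / (cmod (z - \<phi>2))\<^sup>2)"

text \<open>Expectation of a random variable Z on the unit circle with density f w.r.t.
arc length: E(Z) = integral over the circle of z f(z) d(arc length), computed via
the arc-length parametrisation t \<mapsto> cis t, t \<in> [0, 2 pi].\<close>
definition circle_expectation :: "(complex \<Rightarrow> real) \<Rightarrow> complex" where
  "circle_expectation f = integral {0..2*pi} (\<lambda>t. of_real (f (cis t)) * cis t)"

end

theory Submission
  imports Defs "HOL-Complex_Analysis.Cauchy_Integral_Formula"
begin

lemma cmod_sq_c: "complex_of_real ((cmod w)\<^sup>2) = w * cnj w"
  by (metis complex_norm_square of_real_power)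

lemma nz: assumes "cmod z \<le> 1" "cmod a < 1" shows "1 - cnj a * z \<noteq> 0"
proof
  assume "1 - cnj a * z = 0"
  hence "cnj a * z = 1" by simp
  hence "cmod a * cmod z = 1" by (metis complex_mod_cnj norm_mult norm_one)
  moreover have "cmod a * cmod z < 1"
  proof -
    have "cmod a * cmod z \<le> cmod a * 1" using assms(1) by (intro mult_left_mono) auto
    thus ?thesis using assms(2) by simp
  qed
  ultimately show False by simp
qed

lemma poisson_on_circle:
  assumes z: "cmod z = 1" and a: "cmod a < 1"
  shows "complex_of_real ((1 - (cmod a)\<^sup>2) / (cmod (z - a))\<^sup>2)
         = complex_of_real (1 - (cmod a)\<^sup>2) * z / ((z - a) * (1 - cnj a * z))"
proof -
  have za: "z - a \<noteq> 0" using z a by auto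
  have z0: "z \<noteq> 0" using z by auto
  have zc: "z * cnj z = 1" using cmod_sq_c[of z] z by simp
  have d: "1 - cnj a * z \<noteq> 0" using nz[of z a] z a by simp
  have "complex_of_real ((1 - (cmod a)\<^sup>2) / (cmod (z - a))\<^sup>2)
       = complex_of_real (1 - (cmod a)\<^sup>2) / ((z - a) * cnj (z - a))"
    by (simp only: of_real_divide cmod_sq_c)
  also have "(z - a) * cnj (z - a) = (z - a) * (1 - cnj a * z) / z"
  proof -
    have "(z - a) * cnj (z - a) * z = (z - a) * (z * cnj z - cnj a * z)"
      by (simp add: algebra_simps)
    also have "\<dots> = (z - a) * (1 - cnj a * z)" using zc by simp
    finally show ?thesis using z0 by (simp add: field_simps)
  qed
  finally show ?thesis using za z0 d by (simp add: field_simps)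
qed

lemma fixed_zero:
  assumes "cmod (p::complex) < 1"
  shows "s = p * cnj s \<longleftrightarrow> s = 0"
proof
  assume "s = p * cnj s"
  hence "cmod s = cmod p * cmod s" by (metis complex_mod_cnj norm_mult)
  hence "cmod s * (1 - cmod p) = 0" by (simp add: algebra_simps)
  thus "s = 0" using assms by simp
qed simp

lemma gdiff:
  fixes a b p q :: complex
  assumes "1-p*a \<noteq> 0" "1-q*a \<noteq> 0" "1-p*b \<noteq> 0" "1-q*b \<noteq> 0"
  shows "a\<^sup>2/((1-p*a)*(1-q*a)) - b\<^sup>2/((1-p*b)*(1-q*b))
       = (a-b)*(a+b-a*b*cnj(cnj p + cnj q))/((1-p*a)*(1-q*a)*((1-p*b)*(1-q*b)))"
proof -
  have "a\<^sup>2/((1-p*a)*(1-q*a)) - b\<^sup>2/((1-p*b)*(1-q*b))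
     = (a\<^sup>2*((1-p*b)*(1-q*b)) - b\<^sup>2*((1-p*a)*(1-q*a))) / (((1-p*a)*(1-q*a))*((1-p*b)*(1-q*b)))"
    by (rule diff_frac_eq) (use assms in auto)
  also have "a\<^sup>2*((1-p*b)*(1-q*b)) - b\<^sup>2*((1-p*a)*(1-q*a)) = (a-b)*(a+b-a*b*cnj(cnj p + cnj q))"
    by (simp add: power2_eq_square algebra_simps)
  finally show ?thesis by (simp add: mult.assoc)
qed

lemma gderiv_aux:
  fixes d c w :: complex
  assumes "d \<noteq> 0" "d + c*w = 1"
  shows "(2*w*(d*d) - w\<^sup>2*(-2*c*d)) / (d*d*(d*d)) = 2*w/d^3"
proof -
  have "2*w*(d*d) - w\<^sup>2*(-2*c*d) = 2*w*d*(d+c*w)" by (simp add: algebra_simps power2_eq_square)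
  also have "\<dots> = 2*w*d" using assms(2) by simp
  finally show ?thesis using assms(1) by (simp add: power3_eq_cube)
qed

lemma gderiv:
  fixes c w :: complex
  assumes "1 - c*w \<noteq> 0"
  shows "((\<lambda>z. z\<^sup>2/((1-c*z)*(1-c*z))) has_field_derivative 2*w/(1-c*w)^3) (at w)"
proof -
  have d0: "(1-c*w)*(1-c*w) \<noteq> 0" using assms by simp
  have d1: "((\<lambda>z. z\<^sup>2) has_field_derivative 2*w) (at w)"
    by (auto intro!: derivative_eq_intros)
  have d2: "((\<lambda>z. 1-c*z) has_field_derivative -c) (at w)"
    by (auto intro!: derivative_eq_intros)
  have d3: "((\<lambda>z. (1-c*z)*(1-c*z)) has_field_derivative (-2*c*(1-c*w))) (at w)"
    by (rule DERIV_cong[OF DERIV_mult[OF d2 d2]]) (simp add: algebra_simps)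
  show ?thesis
    by (rule DERIV_cong[OF DERIV_divide[OF d1 d3 d0]])
       (rule gderiv_aux[of "1-c*w" c w], use assms in simp_all)
qed

theorem corollary1:
  fixes \<phi>1 \<phi>2 :: complex
  assumes "cmod \<phi>1 < 1" and "cmod \<phi>2 < 1"
  shows "circle_expectation (circ_density \<phi>1 \<phi>2) = 0 \<longleftrightarrow> \<phi>1 = - \<phi>2"
proof -
  define a where "a = \<phi>1"
  define b where "b = \<phi>2"
  have a: "cmod a < 1" and b: "cmod b < 1" using assms by (simp_all add: a_def b_def)
  define A where "A = (cmod (1 - a * cnj b))\<^sup>2 / (1 - (cmod (a * cnj b))\<^sup>2)"
  define pa where "pa = 1 - (cmod a)\<^sup>2"
  define pb where "pb = 1 - (cmod b)\<^sup>2"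
  define C :: complex where "C = of_real (A * pa * pb) / (2 * pi * \<i>)"
  define g where "g = (\<lambda>z. z\<^sup>2 / ((1 - cnj a * z) * (1 - cnj b * z)))"
  define F where "F = (\<lambda>z. C * (g z / ((z - a) * (z - b))))"
  have ab1: "cmod (a * cnj b) < 1"
  proof -
    have "cmod a * cmod b \<le> cmod a * 1" using b by (intro mult_left_mono) auto
    thus ?thesis using a by (simp add: norm_mult)
  qed
  have ab1': "cmod (a * b) < 1" using ab1 by (simp add: norm_mult)
  have "1 - a * cnj b \<noteq> 0"
    using ab1 by (metis norm_one order_less_irrefl right_minus_eq)
  hence Apos: "A > 0" unfolding A_def using ab1
    by (intro divide_pos_pos) (auto simp: abs_square_less_1)
  have papos: "pa > 0" unfolding pa_def using a
    by (simp add: abs_square_less_1)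
  have pbpos: "pb > 0" unfolding pb_def using b
    by (simp add: abs_square_less_1)
  have C0: "C \<noteq> 0" unfolding C_def using Apos papos pbpos by simp
  have integrand: "complex_of_real (circ_density \<phi>1 \<phi>2 (cis t)) * cis t = F (cis t) * \<i> * cis t" for t
  proof -
    let ?z = "cis t"
    have z1: "cmod ?z = 1" by simp
    have "complex_of_real (circ_density \<phi>1 \<phi>2 ?z)
       = of_real (1 / (2 * pi)) * of_real A
         * (of_real pa * ?z / ((?z - a) * (1 - cnj a * ?z)))
         * (of_real pb * ?z / ((?z - b) * (1 - cnj b * ?z)))"
      unfolding circ_density_def a_def[symmetric] b_def[symmetric] A_def[symmetric]
        pa_def pb_def of_real_mult
      by (simp only: poisson_on_circle[OF z1 a] poisson_on_circle[OF z1 b])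
    moreover have "?z - a \<noteq> 0" "?z - b \<noteq> 0" using a b z1 by auto
    moreover have "1 - cnj a * ?z \<noteq> 0" "1 - cnj b * ?z \<noteq> 0" using nz a b z1 by auto
    moreover have Fi: "F ?z * \<i> = of_real (A*pa*pb) / (2*pi) * (g ?z / ((?z-a)*(?z-b)))"
      unfolding F_def C_def by (simp add: mult_ac)
    ultimately show ?thesis unfolding Fi g_def
      by (simp add: field_simps power2_eq_square)
  qed
  have key: "circle_expectation (circ_density \<phi>1 \<phi>2) = I"
    if "(F has_contour_integral I) (circlepath 0 1)" for I
  proof -
    have "((\<lambda>t. F (0 + complex_of_real 1 * cis t) * complex_of_real 1 * \<i> * cis t) has_integral I) {0..2*pi}"
      using that has_contour_integral_part_circlepath_iff[of 0 "2*pi" F I 0 1]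
      by (simp add: circlepath_def)
    hence "((\<lambda>t. complex_of_real (circ_density \<phi>1 \<phi>2 (cis t)) * cis t) has_integral I) {0..2*pi}"
      by (simp add: integrand)
    thus ?thesis unfolding circle_expectation_def by (rule integral_unique)
  qed
  have hol: "g holomorphic_on cball 0 1"
    unfolding g_def using nz a b
    by (intro holomorphic_intros) (auto simp: dist_norm)
  have cont: "continuous_on (cball 0 1) g"
    using hol holomorphic_on_imp_continuous_on by blast
  have pimg: "path_image (circlepath 0 1) = sphere 0 1" by simp
  have ain: "a \<in> ball 0 1" and bin: "b \<in> ball 0 1" using a b by auto
  show ?thesis
  proof (cases "a = b")
    case False
    have i1: "((\<lambda>u. g u/(u-a)) has_contour_integral (2 * of_real pi * \<i> * g a)) (circlepath 0 1)"
      by (rule Cauchy_integral_circlepath_simple[OF hol]) (use a in simp)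
    have i2: "((\<lambda>u. g u/(u-b)) has_contour_integral (2 * of_real pi * \<i> * g b)) (circlepath 0 1)"
      by (rule Cauchy_integral_circlepath_simple[OF hol]) (use b in simp)
    have i3: "((\<lambda>u. C / (a - b) * (g u/(u-a) - g u/(u-b))) has_contour_integral
        (C / (a - b) * (2 * of_real pi * \<i> * g a - 2 * of_real pi * \<i> * g b))) (circlepath 0 1)"
      by (intro has_contour_integral_lmul has_contour_integral_diff i1 i2)
    have "(F has_contour_integral
        (C / (a - b) * (2 * of_real pi * \<i> * g a - 2 * of_real pi * \<i> * g b))) (circlepath 0 1)"
    proof (rule has_contour_integral_eq[OF i3])
      fix x assume "x \<in> path_image (circlepath 0 1)"
      hence "cmod x = 1" by simp
      hence "x - a \<noteq> 0" "x - b \<noteq> 0" using a b by auto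
      hence "g x/(x-a) - g x/(x-b) = (a-b) * (g x/((x-a)*(x-b)))"
        by (simp add: field_simps)
      thus "C / (a - b) * (g x/(x-a) - g x/(x-b)) = F x"
        unfolding F_def using False by simp
    qed
    hence E: "circle_expectation (circ_density \<phi>1 \<phi>2) =
        C / (a - b) * (2 * of_real pi * \<i> * g a - 2 * of_real pi * \<i> * g b)" by (rule key)
    have "circle_expectation (circ_density \<phi>1 \<phi>2) = 0 \<longleftrightarrow> g a - g b = 0"
      unfolding E using C0 False by (simp add: right_diff_distrib[symmetric])
    also have "g a - g b = (a - b) * (a + b - a * b * cnj (a + b)) /
        ((1 - cnj a * a) * (1 - cnj b * a) * (1 - cnj a * b) * (1 - cnj b * b))"
    proof -
      have "1 - cnj a * a \<noteq> 0" "1 - cnj b * a \<noteq> 0" "1 - cnj a * b \<noteq> 0" "1 - cnj b * b \<noteq> 0"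
        using nz a b by auto
      thus ?thesis unfolding g_def using gdiff[of "cnj a" a "cnj b" b] by (simp add: mult.assoc)
    qed
    also have "\<dots> = 0 \<longleftrightarrow> a + b - a * b * cnj (a + b) = 0"
      using False nz a b by simp
    also have "\<dots> \<longleftrightarrow> a + b = 0"
      using fixed_zero[OF ab1', of "a+b"] by auto
    finally show ?thesis unfolding a_def b_def by (auto simp: add_eq_0_iff)
  next
    case True
    have hol': "g holomorphic_on ball 0 1" using hol by (rule holomorphic_on_subset) auto
    note cd = Cauchy_derivative_integral_circlepath[OF cont hol' ain]
    define ci where "ci = contour_integral (circlepath 0 1) (\<lambda>u. g u/(u-a)^2)"
    have na: "1 - cnj a * a \<noteq> 0" using nz a by auto
    have gd: "(g has_field_derivative (2*a/(1-cnj a*a)^3)) (at a)"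
      unfolding g_def True[symmetric] using gderiv[OF na] .
    have ci: "1/(2 * of_real pi * \<i>) * ci = 2*a/(1-cnj a*a)^3"
      using DERIV_unique[OF cd(2) gd] unfolding ci_def .
    have "(F has_contour_integral (C * ci)) (circlepath 0 1)"
    proof (unfold ci_def, rule has_contour_integral_eq[OF has_contour_integral_lmul[OF has_contour_integral_integral[OF cd(1)]]])
      fix x assume "x \<in> path_image (circlepath 0 1)"
      show "C * (g x/(x-a)^2) = F x"
        unfolding F_def True[symmetric] by (simp add: power2_eq_square)
    qed
    hence E: "circle_expectation (circ_density \<phi>1 \<phi>2) = C * ci" by (rule key)
    have ci': "ci = 2 * of_real pi * \<i> * (2*a/(1-cnj a*a)^3)"
      using ci by (simp add: field_simps)
    have "circle_expectation (circ_density \<phi>1 \<phi>2) = 0 \<longleftrightarrow> a = 0"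
      unfolding E ci' using C0 na by simp
    thus ?thesis using True unfolding a_def b_def by auto
  qed
qed

end
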